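(* Let $G$ be a graph with $n\ge 2$ vertices, $m$ edges and minimum degree $\delta$. Then $$EE(G) \ge e^{\frac{2(m-\delta)}{n-1}} + (n-1) - \frac{2(m-\delta)}{n-1},$$ with equality if and only if $G$ is isomorphic to the edgeless graph $\overline{K_n}$.
   Context: All graphs are finite, simple and undirected. For a graph $G$ with adjacency matrix $A(G)$ having eigenvalues $\lambda_1\ge\cdots\ge\lambda_n$, the Estrada index is $EE(G)=\sum_{i=1}^n e^{\lambda_i}$. $\overline{K_n}$ denotes the graph on $n$ vertices with no edges. *)

theory Defs
  imports "Jordan_Normal_Form.Char_Poly"
begin

definition simple_graph :: "nat \<Rightarrow> (nat \<Rightarrow> nat \<Rightarrow> bool) \<Rightarrow> bool" where
  "simple_graph n E \<longleftrightarrow>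
     (\<forall>i j. E i j \<longrightarrow> i < n \<and> j < n) \<and> (\<forall>i j. E i j \<longrightarrow> E j i) \<and> (\<forall>i. \<not> E i i)"

definition adj_matrix :: "nat \<Rightarrow> (nat \<Rightarrow> nat \<Rightarrow> bool) \<Rightarrow> real mat" where
  "adj_matrix n E = mat n n (\<lambda>(i, j). if E i j then 1 else 0)"

text \<open>Eigenvalues with multiplicity: the (real) roots of the characteristic polynomial.
  For a real symmetric matrix all n eigenvalues are real.\<close>
definition estrada_index :: "nat \<Rightarrow> (nat \<Rightarrow> nat \<Rightarrow> bool) \<Rightarrow> real" where
  "estrada_index n E = (\<Sum>l\<in>#proots (char_poly (adj_matrix n E)). exp l)"

definition num_edges :: "nat \<Rightarrow> (nat \<Rightarrow> nat \<Rightarrow> bool) \<Rightarrow> nat" where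
  "num_edges n E = card {{i, j} | i j. i < n \<and> j < n \<and> E i j}"

definition degree :: "nat \<Rightarrow> (nat \<Rightarrow> nat \<Rightarrow> bool) \<Rightarrow> nat \<Rightarrow> nat" where
  "degree n E i = card {j. j < n \<and> E i j}"

definition min_degree :: "nat \<Rightarrow> (nat \<Rightarrow> nat \<Rightarrow> bool) \<Rightarrow> nat" where
  "min_degree n E = Min (degree n E ` {0..<n})"

definition graph_iso :: "nat \<Rightarrow> (nat \<Rightarrow> nat \<Rightarrow> bool) \<Rightarrow> (nat \<Rightarrow> nat \<Rightarrow> bool) \<Rightarrow> bool" where
  "graph_iso n E F \<longleftrightarrow> (\<exists>f. bij_betw f {0..<n} {0..<n} \<and>
      (\<forall>i<n. \<forall>j<n. E i j \<longleftrightarrow> F (f i) (f j)))"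

definition edgeless :: "nat \<Rightarrow> nat \<Rightarrow> bool" where
  "edgeless i j = False"

end

theory Submission imports Defs "Jordan_Normal_Form.Schur_Decomposition" begin

lemma real_sym_eigenvalue_real:
  fixes A :: "real mat"
  assumes A: "A \<in> carrier_mat n n" and sym: "\<And>i j. i<n \<Longrightarrow> j<n \<Longrightarrow> A$$(i,j) = A$$(j,i)"
    and ev: "eigenvalue (map_mat complex_of_real A) a"
  shows "a = complex_of_real (Re a)"
proof -
  let ?B = "map_mat complex_of_real A"
  from ev obtain v where v: "eigenvector ?B v a" unfolding eigenvalue_def by blast
  have dB: "dim_row ?B = n" using A by simp
  from v have vc: "v \<in> carrier_vec n" and v0: "v \<noteq> 0\<^sub>v n" and eq: "?B *\<^sub>v v = a \<cdot>\<^sub>v v"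
    unfolding eigenvector_def dB by auto
  have row: "(\<Sum>j<n. complex_of_real (A$$(i,j)) * v$j) = a * v$i" if "i<n" for i
  proof -
    have "(?B *\<^sub>v v) $ i = (a \<cdot>\<^sub>v v) $ i" using eq by simp
    thus ?thesis using that A vc
      by (simp add: scalar_prod_def lessThan_atLeast0 ac_simps)
  qed
  define s where "s = (\<Sum>i<n. cnj (v$i) * (\<Sum>j<n. complex_of_real (A$$(i,j)) * v$j))"
  define r where "r = (\<Sum>i<n. cnj (v$i) * v$i)"
  have s1: "s = a * r" unfolding s_def r_def using row by (simp add: sum_distrib_left ac_simps)
  have "cnj s = (\<Sum>i<n. v$i * (\<Sum>j<n. complex_of_real (A$$(i,j)) * cnj (v$j)))"
    unfolding s_def by (simp add: sum_distrib_left)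
  also have "\<dots> = (\<Sum>i<n. \<Sum>j<n. v$i * complex_of_real (A$$(i,j)) * cnj (v$j))"
    by (simp add: sum_distrib_left ac_simps)
  also have "\<dots> = (\<Sum>j<n. \<Sum>i<n. v$i * complex_of_real (A$$(i,j)) * cnj (v$j))"
    by (rule sum.swap)
  also have "\<dots> = s" unfolding s_def
    by (auto simp: sum_distrib_left ac_simps sym intro!: sum.cong)
  finally have s2: "cnj s = s" .
  have rr: "r = complex_of_real (\<Sum>i<n. (cmod (v$i))^2)"
    unfolding r_def of_real_sum by (intro sum.cong refl) (metis complex_norm_square mult.commute of_real_power)
  have "\<exists>i<n. v$i \<noteq> 0"
  proof (rule ccontr)
    assume "\<not> ?thesis"
    hence "v = 0\<^sub>v n" using vc by (auto intro!: eq_vecI)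
    with v0 show False by simp
  qed
  then obtain i where i: "i<n" "v$i \<noteq> 0" by blast
  have "(\<Sum>i<n. (cmod (v$i))^2) > 0"
    by (rule sum_pos2[of _ i]) (use i in auto)
  hence r0: "r \<noteq> 0" unfolding rr by (metis of_real_eq_0_iff less_irrefl)
  have "cnj a * cnj r = a * r" using s1 s2 by (metis complex_cnj_mult)
  moreover have "cnj r = r" unfolding rr by simp
  ultimately have "cnj a = a" using r0 by simp
  thus ?thesis by (metis Reals_cnj_iff complex_is_Real_iff of_real_Re)
qed

interpretation rp: map_poly_inj_idom_hom complex_of_real ..

lemma mp: "map_poly complex_of_real [:- r, 1:] = [:- complex_of_real r, 1:]"
  by (simp add: map_poly_pCons)

lemma real_sym_char_poly_split:
  fixes A :: "real mat"
  assumes A: "A \<in> carrier_mat n n" and sym: "\<And>i j. i<n \<Longrightarrow> j<n \<Longrightarrow> A$$(i,j) = A$$(j,i)"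
  shows "\<exists>es. char_poly A = (\<Prod>a\<leftarrow>es. [:-a,1:]) \<and> length es = n"
proof -
  let ?B = "map_mat complex_of_real A"
  have B: "?B \<in> carrier_mat n n" using A by simp
  from char_poly_factorized[OF B] obtain as where
    cp: "char_poly ?B = (\<Prod>a\<leftarrow>as. [:-a,1:])" and len: "length as = n" by blast
  have re: "a = complex_of_real (Re a)" if "a \<in> set as" for a
  proof (rule real_sym_eigenvalue_real[OF A sym])
    show "eigenvalue ?B a" unfolding eigenvalue_root_char_poly[OF B] cp
      using linear_poly_root[OF that] .
  qed (auto)
  define es where "es = map Re as"
  have fac: "[:-a,1:] = map_poly complex_of_real [:- Re a, 1:]" if "a \<in> set as" for a
  proof -
    have "map_poly complex_of_real [:- Re a, 1:] = [:- complex_of_real (Re a), 1:]" by (rule mp)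
    also have "\<dots> = [:-a,1:]" using re[OF that] by simp
    finally show ?thesis by simp
  qed
  have "map_poly complex_of_real (char_poly A) = char_poly ?B"
    by (rule of_real_hom.char_poly_hom[OF A, symmetric])
  also have "\<dots> = (\<Prod>a\<leftarrow>es. map_poly complex_of_real [:-a,1:])"
    unfolding cp es_def map_map o_def using re
    by (intro arg_cong[where f=prod_list] map_cong refl) (rule fac)
  also have "\<dots> = map_poly complex_of_real (\<Prod>a\<leftarrow>es. [:-a,1:])"
    by (simp add: rp.hom_prod_list o_def)
  finally have "char_poly A = (\<Prod>a\<leftarrow>es. [:-a,1:])" by (rule rp.injectivity)
  moreover have "length es = n" using len es_def by simp
  ultimately show ?thesis by blast
qed

definition tr :: "'a::comm_ring_1 mat \<Rightarrow> 'a" where "tr X = (\<Sum>i<dim_row X. X$$(i,i))"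

lemma tr_comm:
  assumes X: "X \<in> carrier_mat n m" and Y: "Y \<in> carrier_mat m n"
  shows "tr (X*Y) = tr (Y*X)"
proof -
  have "tr (X*Y) = (\<Sum>i<n. \<Sum>j<m. X$$(i,j) * Y$$(j,i))"
    unfolding tr_def using X Y by (auto simp: scalar_prod_def lessThan_atLeast0 intro!: sum.cong)
  also have "\<dots> = (\<Sum>j<m. \<Sum>i<n. Y$$(j,i) * X$$(i,j))"
    by (subst sum.swap) (simp add: ac_simps)
  also have "\<dots> = tr (Y*X)"
    unfolding tr_def using X Y by (auto simp: scalar_prod_def lessThan_atLeast0 intro!: sum.cong)
  finally show ?thesis .
qed

lemma ut_mult:
  assumes X: "X \<in> carrier_mat n n" and Y: "Y \<in> carrier_mat n n"
    and ux: "upper_triangular X" and uy: "upper_triangular Y"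
  shows "upper_triangular (X*Y)" "\<And>i. i<n \<Longrightarrow> (X*Y)$$(i,i) = X$$(i,i) * Y$$(i,i)"
proof -
  show "upper_triangular (X*Y)"
  proof (rule upper_triangularI)
    fix i j assume ji: "j < i" and i: "i < dim_row (X*Y)"
    hence "i < n" using X by simp
    have "(X*Y)$$(i,j) = (\<Sum>k<n. X$$(i,k) * Y$$(k,j))"
      using X Y \<open>i<n\<close> ji by (auto simp: scalar_prod_def lessThan_atLeast0 intro!: sum.cong)
    also have "\<dots> = 0"
    proof (rule sum.neutral, intro ballI)
      fix k assume "k \<in> {..<n}"
      show "X$$(i,k) * Y$$(k,j) = 0"
      proof (cases "k < i")
        case True thus ?thesis using ux X \<open>i<n\<close> by (auto simp: upper_triangular_def)
      next
        case False hence "j < k" using ji by simp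
        thus ?thesis using uy Y \<open>k \<in> {..<n}\<close> by (auto simp: upper_triangular_def)
      qed
    qed
    finally show "(X*Y)$$(i,j) = 0" .
  qed
  fix i assume i: "i<n"
  have "(X*Y)$$(i,i) = (\<Sum>k<n. X$$(i,k) * Y$$(k,i))"
    using X Y i by (auto simp: scalar_prod_def lessThan_atLeast0 intro!: sum.cong)
  also have "\<dots> = (\<Sum>k<n. if k = i then X$$(i,i) * Y$$(i,i) else 0)"
  proof (rule sum.cong[OF refl])
    fix k assume k: "k \<in> {..<n}"
    show "X$$(i,k) * Y$$(k,i) = (if k = i then X$$(i,i) * Y$$(i,i) else 0)"
    proof (cases "k < i")
      case True thus ?thesis using ux X i by (auto simp: upper_triangular_def)
    next
      case False
      show ?thesis
      proof (cases "k = i")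
        case False hence "i < k" using \<open>\<not> k < i\<close> by simp
        thus ?thesis using uy Y k by (auto simp: upper_triangular_def)
      qed simp
    qed
  qed
  also have "\<dots> = X$$(i,i) * Y$$(i,i)" using i by simp
  finally show "(X*Y)$$(i,i) = X$$(i,i) * Y$$(i,i)" .
qed

lemma ut_pow:
  assumes B: "B \<in> carrier_mat n n" and u: "upper_triangular B"
  shows "upper_triangular (B ^\<^sub>m k) \<and> (\<forall>i<n. (B ^\<^sub>m k)$$(i,i) = B$$(i,i) ^ k)"
proof (induction k)
  case 0 thus ?case using B by auto
next
  case (Suc k)
  have Bk: "B ^\<^sub>m k \<in> carrier_mat n n" using B by simp
  have "\<forall>i<n. (B ^\<^sub>m Suc k)$$(i,i) = B$$(i,i) ^ Suc k"
  proof (intro allI impI)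
    fix i assume i: "i < n"
    have "(B ^\<^sub>m Suc k)$$(i,i) = (B ^\<^sub>m k)$$(i,i) * B$$(i,i)"
      using ut_mult(2)[OF Bk B] Suc u i by simp
    also have "\<dots> = B$$(i,i) ^ k * B$$(i,i)" using Suc i by simp
    finally show "(B ^\<^sub>m Suc k)$$(i,i) = B$$(i,i) ^ Suc k" by (simp only: power_Suc2)
  qed
  thus ?case using ut_mult(1)[OF Bk B] Suc u by simp
qed

lemma proots_lin_prod: "proots (\<Prod>a\<leftarrow>ds. [:-a,1:]) = mset (ds :: real list)"
proof (induction ds)
  case (Cons a ds)
  have "0 \<notin> set (map (\<lambda>a. [:-a,1:]) ds)" by auto
  hence nz: "(\<Prod>a\<leftarrow>ds. [:-a,1:]) \<noteq> 0" by (simp only: prod_list_zero_iff) simp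
  have "(\<Prod>b\<leftarrow>a#ds. [:-b,1:]) = [:-a,1:] * (\<Prod>b\<leftarrow>ds. [:-b,1:])" by simp
  moreover have "proots ([:-a,1:] * (\<Prod>b\<leftarrow>ds. [:-b,1:])) = proots [:-a,1:] + proots (\<Prod>b\<leftarrow>ds. [:-b,1:])"
    by (rule proots_mult) (simp, rule nz)
  ultimately have "proots (\<Prod>b\<leftarrow>a#ds. [:-b,1:]) = proots [:-a,1:] + proots (\<Prod>b\<leftarrow>ds. [:-b,1:])"
    by metis
  thus ?case using Cons by (simp add: proots_linear_factor)
qed simp

lemma trace_pow_eig:
  fixes A :: "real mat"
  assumes A: "A \<in> carrier_mat n n" and cp: "char_poly A = (\<Prod>a\<leftarrow>es. [:-a,1:])"
  shows "tr ((A + c \<cdot>\<^sub>m 1\<^sub>m n) ^\<^sub>m k) = (\<Sum>l\<in>#proots (char_poly A). (l + c)^k)"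
proof -
  from schur_decomposition_exists[OF A cp] obtain B where
    B: "B \<in> carrier_mat n n" and ut: "upper_triangular B" and sim: "similar_mat A B" by blast
  from sim obtain P Q where wit: "similar_mat_wit A B P Q" unfolding similar_mat_def by blast
  from similar_mat_witD2[OF A wit] have P: "P \<in> carrier_mat n n" and Q: "Q \<in> carrier_mat n n"
    and PQ: "P * Q = 1\<^sub>m n" and QP: "Q * P = 1\<^sub>m n" and AB: "A = P * B * Q" by auto
  define B' where "B' = B + c \<cdot>\<^sub>m 1\<^sub>m n"
  have B': "B' \<in> carrier_mat n n" using B unfolding B'_def by simp
  have "P * B' * Q = P * B * Q + c \<cdot>\<^sub>m (P * Q)"
  proof -
    have "P * B' = P * B + c \<cdot>\<^sub>m P"
      unfolding B'_def using P B by (simp add: mult_add_distrib_mat[of P n n] mult_smult_distrib[of P n n "1\<^sub>m n" n] right_mult_one_mat[of P n n])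
    hence "P * B' * Q = P * B * Q + (c \<cdot>\<^sub>m P) * Q"
      using P B Q by (simp add: add_mult_distrib_mat[of _ n n _ _ n])
    thus ?thesis using P Q by (simp add: mult_smult_assoc_mat[of P n n Q n])
  qed
  hence eqA: "A + c \<cdot>\<^sub>m 1\<^sub>m n = P * B' * Q" using AB PQ by simp
  have wit': "similar_mat_wit (A + c \<cdot>\<^sub>m 1\<^sub>m n) B' P Q"
    unfolding similar_mat_wit_def Let_def using eqA A B' P Q PQ QP by auto
  have pw: "(A + c \<cdot>\<^sub>m 1\<^sub>m n) ^\<^sub>m k = P * B' ^\<^sub>m k * Q"
    by (rule similar_mat_wit_pow_id[OF wit'])
  have Bk: "B' ^\<^sub>m k \<in> carrier_mat n n" using B' by simp
  have "tr (P * B' ^\<^sub>m k * Q) = tr (Q * (P * B' ^\<^sub>m k))"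
    by (rule tr_comm) (use P Q Bk in auto)
  also have "Q * (P * B' ^\<^sub>m k) = B' ^\<^sub>m k"
    using P Q Bk QP by (simp add: assoc_mult_mat[symmetric, of Q n n P n] left_mult_one_mat[of "B' ^\<^sub>m k" n n])
  finally have t1: "tr ((A + c \<cdot>\<^sub>m 1\<^sub>m n) ^\<^sub>m k) = tr (B' ^\<^sub>m k)" using pw by simp
  have utB': "upper_triangular B'" using ut B unfolding B'_def upper_triangular_def by auto
  have dB': "\<And>i. i<n \<Longrightarrow> B'$$(i,i) = B$$(i,i) + c" using B unfolding B'_def by auto
  have "tr (B' ^\<^sub>m k) = (\<Sum>i<n. (B$$(i,i) + c)^k)"
    unfolding tr_def using ut_pow[OF B' utB', of k] dB' Bk by auto
  also have "\<dots> = (\<Sum>l\<leftarrow>diag_mat B. (l + c)^k)"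
    using B by (simp add: diag_mat_def sum_list_sum_nth lessThan_atLeast0)
  also have "\<dots> = (\<Sum>l\<in>#mset (diag_mat B). (l + c)^k)"
    by (metis mset_map sum_mset_sum_list)
  also have "mset (diag_mat B) = proots (char_poly A)"
    using char_poly_similar[OF sim] char_poly_upper_triangular[OF B ut] proots_lin_prod by simp
  finally show ?thesis using t1 by simp
qed

lemma cs_sum:
  fixes a b :: "nat \<Rightarrow> real"
  shows "(\<Sum>i\<in>I. a i * b i)^2 \<le> (\<Sum>i\<in>I. (a i)^2) * (\<Sum>i\<in>I. (b i)^2)"
proof -
  let ?A = "\<Sum>i\<in>I. (a i)^2" and ?B = "\<Sum>i\<in>I. (b i)^2" and ?S = "\<Sum>i\<in>I. a i * b i"
  have pt: "(a i * b j - a j * b i)^2 = ((a i)^2*(b j)^2 + (b i)^2*(a j)^2) - 2*((a i*b i)*(a j*b j))" for i j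
    by (simp add: power2_eq_square algebra_simps)
  have "0 \<le> (\<Sum>i\<in>I. \<Sum>j\<in>I. (a i * b j - a j * b i)^2)"
    by (intro sum_nonneg) auto
  also have "\<dots> = (\<Sum>i\<in>I. \<Sum>j\<in>I. (a i)^2*(b j)^2) + (\<Sum>i\<in>I. \<Sum>j\<in>I. (b i)^2*(a j)^2)
      - (\<Sum>i\<in>I. \<Sum>j\<in>I. 2*((a i*b i)*(a j*b j)))"
    by (simp only: pt sum.distrib sum_subtractf)
  also have "(\<Sum>i\<in>I. \<Sum>j\<in>I. (a i)^2*(b j)^2) = ?A * ?B" by (rule sum_product[symmetric])
  also have "(\<Sum>i\<in>I. \<Sum>j\<in>I. (b i)^2*(a j)^2) = ?B * ?A" by (rule sum_product[symmetric])
  also have "(\<Sum>i\<in>I. \<Sum>j\<in>I. 2*((a i*b i)*(a j*b j))) = 2 * (?S * ?S)"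
    unfolding sum_product by (simp only: sum_distrib_left)
  finally show ?thesis by (simp add: power2_eq_square)
qed

lemma pow_mat_add:
  assumes A: "A \<in> carrier_mat n n"
  shows "A ^\<^sub>m (a + b) = A ^\<^sub>m a * A ^\<^sub>m b"
proof (induction b)
  case 0 thus ?case using A by (simp add: right_mult_one_mat[of _ n n])
next
  case (Suc b)
  have "A ^\<^sub>m (a + Suc b) = (A ^\<^sub>m a * A ^\<^sub>m b) * A" using Suc by simp
  also have "\<dots> = A ^\<^sub>m a * (A ^\<^sub>m b * A)"
    using A by (simp add: assoc_mult_mat[of _ n n _ n _ n])
  finally show ?case by simp
qed

lemma pow_mat_sym:
  fixes A :: "real mat"
  assumes A: "A \<in> carrier_mat n n" and sym: "\<And>i j. i<n \<Longrightarrow> j<n \<Longrightarrow> A$$(i,j) = A$$(j,i)"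
  shows "i<n \<Longrightarrow> j<n \<Longrightarrow> (A ^\<^sub>m k)$$(i,j) = (A ^\<^sub>m k)$$(j,i)"
proof -
  have AT: "transpose_mat A = A" using A sym by (auto intro!: eq_matI)
  have A1: "A ^\<^sub>m 1 = A" using A by simp
  have "transpose_mat (A ^\<^sub>m k) = A ^\<^sub>m k"
  proof (induction k)
    case 0 thus ?case using A by simp
  next
    case (Suc k)
    have "transpose_mat (A ^\<^sub>m Suc k) = transpose_mat A * transpose_mat (A ^\<^sub>m k)"
      using transpose_mult[of "A ^\<^sub>m k" n n A n] A by simp
    also have "\<dots> = A ^\<^sub>m 1 * A ^\<^sub>m k" using AT Suc A1 by simp
    also have "\<dots> = A ^\<^sub>m (1 + k)" by (rule pow_mat_add[OF A, symmetric])
    also have "\<dots> = A ^\<^sub>m (Suc k)" by simp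
    finally show ?case .
  qed
  moreover assume "i<n" "j<n"
  ultimately show ?thesis using A
    by (metis carrier_matD index_transpose_mat(1) pow_mat_dim_square)
qed

definition qf :: "real mat \<Rightarrow> (nat \<Rightarrow> real) \<Rightarrow> real" where
  "qf X y = (\<Sum>i<dim_row X. \<Sum>k<dim_row X. y i * X$$(i,k) * y k)"

lemma qf_bounds:
  assumes X: "X \<in> carrier_mat n n" and sym: "\<And>i j. i<n \<Longrightarrow> j<n \<Longrightarrow> X$$(i,j) = X$$(j,i)"
  shows "(qf X y)^2 \<le> (\<Sum>i<n. (y i)^2) * qf (X*X) y"
    "qf (X*X) y \<le> tr (X*X) * (\<Sum>i<n. (y i)^2)"
proof -
  define z where "z j = (\<Sum>k<n. X$$(j,k) * y k)" for j
  have XX: "(X*X)$$(i,k) = (\<Sum>j<n. X$$(i,j) * X$$(j,k))" if "i<n" "k<n" for i k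
    using X that by (auto simp: scalar_prod_def lessThan_atLeast0 intro!: sum.cong)
  have q2: "qf (X*X) y = (\<Sum>j<n. (z j)^2)"
  proof -
    have "qf (X*X) y = (\<Sum>i<n. \<Sum>k<n. \<Sum>j<n. y i * X$$(i,j) * (X$$(j,k) * y k))"
      unfolding qf_def using X XX by (auto simp: sum_distrib_left sum_distrib_right ac_simps intro!: sum.cong)
    also have "\<dots> = (\<Sum>i<n. \<Sum>j<n. \<Sum>k<n. y i * X$$(i,j) * (X$$(j,k) * y k))"
      by (intro sum.cong refl sum.swap)
    also have "\<dots> = (\<Sum>j<n. \<Sum>i<n. \<Sum>k<n. y i * X$$(i,j) * (X$$(j,k) * y k))"
      by (rule sum.swap)
    also have "\<dots> = (\<Sum>j<n. (\<Sum>i<n. y i * X$$(i,j)) * z j)"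
      unfolding z_def sum_product by (rule refl)
    also have "\<dots> = (\<Sum>j<n. (z j)^2)"
    proof (rule sum.cong[OF refl])
      fix j assume "j \<in> {..<n}"
      hence "(\<Sum>i<n. y i * X$$(i,j)) = z j" unfolding z_def using sym
        by (auto intro!: sum.cong simp: mult.commute)
      thus "(\<Sum>i<n. y i * X$$(i,j)) * z j = (z j)^2" by (simp add: power2_eq_square)
    qed
    finally show ?thesis .
  qed
  have q1: "qf X y = (\<Sum>j<n. y j * z j)"
    unfolding qf_def z_def using X by (simp add: sum_distrib_left ac_simps)
  show "(qf X y)^2 \<le> (\<Sum>i<n. (y i)^2) * qf (X*X) y"
    unfolding q1 q2 by (rule cs_sum)
  have "(z j)^2 \<le> (\<Sum>k<n. (X$$(j,k))^2) * (\<Sum>k<n. (y k)^2)" for j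
    unfolding z_def by (rule cs_sum)
  hence "qf (X*X) y \<le> (\<Sum>j<n. (\<Sum>k<n. (X$$(j,k))^2) * (\<Sum>k<n. (y k)^2))"
    unfolding q2 by (rule sum_mono)
  also have "\<dots> = (\<Sum>j<n. \<Sum>k<n. (X$$(j,k))^2) * (\<Sum>k<n. (y k)^2)"
    by (simp add: sum_distrib_right)
  also have "(\<Sum>j<n. \<Sum>k<n. (X$$(j,k))^2) = tr (X*X)"
    unfolding tr_def using X XX sym by (auto simp: power2_eq_square intro!: sum.cong)
  finally show "qf (X*X) y \<le> tr (X*X) * (\<Sum>i<n. (y i)^2)" .
qed

lemma pow_contra:
  fixes R rho :: real and K :: nat
  assumes R0: "0 \<le> R" and Rr: "R < rho" and all: "\<And>k. rho ^ (2^Suc k) \<le> K * R ^ (2^Suc k)"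
  shows False
proof -
  have rp: "0 < rho" using R0 Rr by simp
  define q where "q = R / rho"
  have q0: "0 \<le> q" and q1: "q < 1" using R0 Rr rp unfolding q_def by auto
  obtain k where k: "q ^ k < 1 / (real K + 1)" using real_arch_pow_inv[OF _ q1, of "1 / (real K + 1)"] by auto
  define M where "M = (2::nat) ^ Suc k"
  have kM: "k \<le> M" unfolding M_def
    by (metis less_exp less_imp_le_nat power_Suc2 le_trans mult_2_right le_add1)
  have "q ^ M \<le> q ^ k" by (rule power_decreasing[OF kM q0]) (use q1 in simp)
  hence qM: "q ^ M < 1 / (real K + 1)" using k by simp
  have RM: "R ^ M = q ^ M * rho ^ M" unfolding q_def using rp by (simp add: power_divide)
  have pM: "0 < rho ^ M" using rp by simp
  have "rho ^ M \<le> K * (q ^ M * rho ^ M)" using all[of k] RM unfolding M_def by simp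
  also have "\<dots> = (K * q ^ M) * rho ^ M" by simp
  finally have "1 \<le> K * q ^ M" using pM by simp
  moreover have "K * q ^ M \<le> K * (1 / (real K + 1))" using qM by (intro mult_left_mono) auto
  moreover have "real K * (1 / (real K + 1)) < 1" by (simp add: field_simps)
  ultimately show False by simp
qed

lemma exists_big_eig:
  fixes A :: "real mat" and y :: "nat \<Rightarrow> real" and c rho :: real
  assumes A: "A \<in> carrier_mat n n" and sym: "\<And>i j. i<n \<Longrightarrow> j<n \<Longrightarrow> A$$(i,j) = A$$(j,i)"
    and cp: "char_poly A = (\<Prod>a\<leftarrow>es. [:-a,1:])"
    and nonneg: "\<And>l. l \<in># proots (char_poly A) \<Longrightarrow> 0 \<le> l + c"
    and Y: "0 < (\<Sum>i<n. (y i)^2)"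
    and rho: "qf (A + c \<cdot>\<^sub>m 1\<^sub>m n) y = rho * (\<Sum>i<n. (y i)^2)" and rpos: "0 < rho"
  shows "\<exists>l\<in>#proots (char_poly A). rho \<le> l + c"
proof (rule ccontr)
  assume neg: "\<not> ?thesis"
  define L where "L = proots (char_poly A)"
  define Ys where "Ys = (\<Sum>i<n. (y i)^2)"
  define A' where "A' = A + c \<cdot>\<^sub>m 1\<^sub>m n"
  have A': "A' \<in> carrier_mat n n" using A unfolding A'_def by simp
  have sym': "A'$$(i,j) = A'$$(j,i)" if "i<n" "j<n" for i j
    using A sym that unfolding A'_def by auto
  have symp: "(A' ^\<^sub>m N)$$(i,j) = (A' ^\<^sub>m N)$$(j,i)" if "i<n" "j<n" for i j N
    by (rule pow_mat_sym[OF A' sym' that])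
  have A1: "A' ^\<^sub>m 1 = A'" using A' by simp
  have low: "rho ^ (2^k) * Ys \<le> qf (A' ^\<^sub>m (2^k)) y" for k
  proof (induction k)
    case 0 thus ?case using rho A1 unfolding A'_def Ys_def by simp
  next
    case (Suc k)
    define X where "X = A' ^\<^sub>m (2^k)"
    have X: "X \<in> carrier_mat n n" using A' unfolding X_def by simp
    have XX: "A' ^\<^sub>m (2^Suc k) = X * X" unfolding X_def
      using pow_mat_add[OF A', of "2^k" "2^k"] by (simp add: mult_2)
    have b1: "(qf X y)^2 \<le> Ys * qf (X*X) y"
      using qf_bounds(1)[OF X, of y] symp unfolding X_def Ys_def by blast
    have nn: "0 \<le> rho ^ (2^k) * Ys" using rpos Y unfolding Ys_def by simp
    have "(rho ^ (2^k) * Ys)^2 \<le> (qf X y)^2"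
      using Suc nn unfolding X_def by (intro power_mono) auto
    hence "(rho ^ (2^k) * Ys)^2 \<le> Ys * qf (X*X) y" using b1 by linarith
    hence "Ys * (rho ^ (2^Suc k) * Ys) \<le> Ys * qf (X*X) y"
      by (simp add: power2_eq_square power_mult_distrib power_add mult_2 ac_simps)
    hence "rho ^ (2^Suc k) * Ys \<le> qf (X*X) y" using Y unfolding Ys_def by simp
    thus ?case using XX by simp
  qed
  have up: "rho ^ (2^Suc k) \<le> (\<Sum>l\<in>#L. (l + c) ^ (2^Suc k))" for k
  proof -
    define X where "X = A' ^\<^sub>m (2^k)"
    have X: "X \<in> carrier_mat n n" using A' unfolding X_def by simp
    have XX: "A' ^\<^sub>m (2^Suc k) = X * X" unfolding X_def
      using pow_mat_add[OF A', of "2^k" "2^k"] by (simp add: mult_2)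
    have "rho ^ (2^Suc k) * Ys \<le> qf (X * X) y" using low[of "Suc k"] XX by simp
    also have "\<dots> \<le> tr (X*X) * Ys"
      using qf_bounds(2)[OF X, of y] symp unfolding X_def Ys_def by blast
    finally have "rho ^ (2^Suc k) \<le> tr (X*X)" using Y unfolding Ys_def by simp
    also have "tr (X*X) = (\<Sum>l\<in>#L. (l + c) ^ (2^Suc k))"
      using trace_pow_eig[OF A cp, of c "2^Suc k"] XX unfolding A'_def L_def by simp
    finally show ?thesis .
  qed
  define R where "R = Max (insert 0 ((\<lambda>l. l + c) ` set_mset L))"
  have R0: "0 \<le> R" unfolding R_def by simp
  have lR: "l + c \<le> R" if "l \<in># L" for l unfolding R_def using that by (intro Max_ge) auto
  have Rr: "R < rho"
  proof -
    have "R \<in> insert 0 ((\<lambda>l. l + c) ` set_mset L)" unfolding R_def by (intro Max_in) auto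
    thus ?thesis using neg rpos unfolding L_def by force
  qed
  show False
  proof (rule pow_contra[OF R0 Rr])
    fix k
    have "(\<Sum>l\<in>#L. (l + c) ^ (2^Suc k)) \<le> (\<Sum>l\<in>#L. R ^ (2^Suc k))"
      by (rule sum_mset_mono) (use lR nonneg[unfolded L_def[symmetric]] in \<open>auto intro: power_mono\<close>)
    also have "\<dots> = real (size L) * R ^ (2^Suc k)" by (simp add: sum_mset_constant)
    finally show "rho ^ (2^Suc k) \<le> real (size L) * R ^ (2^Suc k)" using up[of k] by linarith
  qed
qed

lemma card_filter_sum:
  assumes "finite A"
  shows "real (card {j\<in>A. Q j}) = (\<Sum>j\<in>A. if Q j then 1 else 0)"
  using assms by (simp add: sum.inter_filter[symmetric])

lemma degree_sum:
  "real (degree n E i) = (\<Sum>j<n. if E i j then 1 else 0)"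
proof -
  have "{j. j < n \<and> E i j} = {j\<in>{..<n}. E i j}" by auto
  thus ?thesis unfolding degree_def using card_filter_sum[of "{..<n}" "E i"] by simp
qed

lemma edges2:
  assumes g: "simple_graph n E"
  shows "2 * real (num_edges n E) = (\<Sum>i<n. \<Sum>j<n. if E i j then 1 else 0)"
proof -
  have symE: "E i j \<Longrightarrow> E j i" and irr: "\<not> E i i" for i j using g unfolding simple_graph_def by auto
  define Sl where "Sl = {(i,j). i<n \<and> j<n \<and> E i j \<and> i<j}"
  define Sg where "Sg = {(i,j). i<n \<and> j<n \<and> E i j \<and> j<i}"
  define S where "S = Sigma {..<n} (\<lambda>i. {j\<in>{..<n}. E i j})"
  have fin: "finite Sl" "finite Sg" unfolding Sl_def Sg_def
    by (rule finite_subset[of _ "{..<n} \<times> {..<n}"], auto)+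
  have SU: "S = Sl \<union> Sg" unfolding S_def Sl_def Sg_def using irr by auto (metis linorder_neqE_nat)
  have disj: "Sl \<inter> Sg = {}" unfolding Sl_def Sg_def by auto
  have "Sg = prod.swap ` Sl" unfolding Sl_def Sg_def using symE by (auto simp: image_iff)
  hence cg: "card Sg = card Sl" by (simp add: card_image)
  have ES: "{{i, j} | i j. i < n \<and> j < n \<and> E i j} = (\<lambda>(i,j). {i,j}) ` Sl"
  proof
    show "(\<lambda>(i,j). {i,j}) ` Sl \<subseteq> {{i, j} | i j. i < n \<and> j < n \<and> E i j}"
      unfolding Sl_def by auto
    show "{{i, j} | i j. i < n \<and> j < n \<and> E i j} \<subseteq> (\<lambda>(i,j). {i,j}) ` Sl"
    proof
      fix e assume "e \<in> {{i, j} | i j. i < n \<and> j < n \<and> E i j}"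
      then obtain i j where e: "e = {i,j}" "i<n" "j<n" "E i j" by blast
      have "i \<noteq> j" using e irr by auto
      show "e \<in> (\<lambda>(i,j). {i,j}) ` Sl"
      proof (cases "i < j")
        case True thus ?thesis using e by (intro image_eqI[where x="(i,j)"]) (auto simp: Sl_def)
      next
        case False
        hence "(j,i) \<in> Sl" using e \<open>i\<noteq>j\<close> symE unfolding Sl_def by auto
        moreover have "e = {j,i}" using e by auto
        ultimately show ?thesis by force
      qed
    qed
  qed
  have inj: "inj_on (\<lambda>(i,j). {i,j}) Sl"
    unfolding inj_on_def Sl_def by (auto simp: doubleton_eq_iff)
  have "num_edges n E = card Sl" unfolding num_edges_def ES using card_image[OF inj] by simp
  moreover have "card S = card Sl + card Sg" unfolding SU using card_Un_disjoint[OF fin disj] .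
  moreover have "real (card S) = (\<Sum>i<n. \<Sum>j<n. if E i j then 1 else 0)"
    unfolding S_def by (simp add: degree_sum[unfolded degree_def])
  ultimately show ?thesis using cg by simp
qed


lemma exp_minus_mono:
  fixes x l :: real
  assumes "0 \<le> x" "x \<le> l"
  shows "exp x - x \<le> exp l - l"
proof -
  have "exp l = exp x * exp (l - x)" by (simp add: exp_diff)
  also have "\<dots> \<ge> exp x * (1 + (l - x))"
    by (intro mult_left_mono) (auto simp: exp_ge_add_one_self)
  finally have "exp x + exp x * (l - x) \<le> exp l" by (simp add: algebra_simps)
  moreover have "l - x \<le> exp x * (l - x)"
    using mult_right_mono[of 1 "exp x" "l - x"] assms by simp
  ultimately show ?thesis by linarith
qed

lemma exp_strict:
  fixes l :: real
  assumes "l \<noteq> 0" shows "1 + l < exp l"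
proof (cases "1 + l/2 < 0")
  case True thus ?thesis using exp_gt_zero[of l] by linarith
next
  case False
  have "(1 + l/2)^2 \<le> (exp (l/2))^2"
    using False by (intro power_mono) (auto simp: exp_ge_add_one_self)
  also have "(exp (l/2))^2 = exp l" by (simp add: power2_eq_square exp_add[symmetric])
  finally have "1 + l + l^2/4 \<le> exp l" by (simp add: power2_eq_square algebra_simps)
  moreover have "0 < l^2/4" using assms by simp
  ultimately show ?thesis by linarith
qed

lemma mset_term_le:
  fixes f :: "real \<Rightarrow> real"
  assumes "\<And>l. l \<in># K \<Longrightarrow> 0 \<le> f l" and "a \<in># K"
  shows "f a \<le> (\<Sum>l\<in>#K. f l)"
proof -
  from multi_member_split[OF assms(2)] obtain K' where K: "K = add_mset a K'" by blast
  have "(\<Sum>l\<in>#K'. (0::real)) \<le> (\<Sum>l\<in>#K'. f l)" using assms(1) K by (intro sum_mset_mono) auto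
  hence "0 \<le> (\<Sum>l\<in>#K'. f l)" by simp
  thus ?thesis using K by simp
qed

lemma sum_mset_cong':
  assumes "\<And>l. l \<in># K \<Longrightarrow> f l = g l"
  shows "(\<Sum>l\<in>#K. f l) = (\<Sum>l\<in>#K. g l)"
  using image_mset_cong[of K f g] assms by simp

theorem mainTheorem5:
  fixes n :: nat and E :: "nat \<Rightarrow> nat \<Rightarrow> bool"
  assumes "simple_graph n E" and "n \<ge> 2"
  defines "x \<equiv> 2 * (real (num_edges n E) - real (min_degree n E)) / (real n - 1)"
  shows "estrada_index n E \<ge> exp x + (real n - 1) - x \<and>
         (estrada_index n E = exp x + (real n - 1) - x \<longleftrightarrow> graph_iso n E edgeless)"
proof -
  note g = assms(1) and n2 = assms(2)
  have symE: "E i j \<Longrightarrow> E j i" and irr: "\<not> E i i" and bnd: "E i j \<Longrightarrow> i < n \<and> j < n" for i j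
    using g unfolding simple_graph_def by auto
  define M where "M = adj_matrix n E"
  define I where "I i k = (if E i k then 1 else 0 :: real)" for i k
  have M: "M \<in> carrier_mat n n" unfolding M_def adj_matrix_def by simp
  have Mij: "M$$(i,j) = I i j" if "i<n" "j<n" for i j
    using that unfolding M_def adj_matrix_def I_def by simp
  have symM: "M$$(i,j) = M$$(j,i)" if "i<n" "j<n" for i j
    using that symE by (auto simp: Mij I_def)
  obtain es where cp: "char_poly M = (\<Prod>a\<leftarrow>es. [:-a,1:])" and les: "length es = n"
    using real_sym_char_poly_split[OF M symM] by blast
  define L where "L = proots (char_poly M)"
  have Les: "L = mset es" unfolding L_def cp by (rule proots_lin_prod)
  have sizeL: "size L = n" using Les les by simp
  define P where "P = (\<Sum>i<n. \<Sum>k<n. I i k)"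
  have EE: "estrada_index n E = (\<Sum>l\<in>#L. exp l)" unfolding estrada_index_def L_def M_def ..
  have M0: "M + 0 \<cdot>\<^sub>m 1\<^sub>m n = M" using M by (auto intro!: eq_matI)
  have M1: "M ^\<^sub>m 1 = M" using M by simp
  have M2: "M ^\<^sub>m 2 = M * M" using M by (simp add: numeral_2_eq_2)
  have "tr M = (\<Sum>l\<in>#L. l)"
    using trace_pow_eig[OF M cp, of 0 1] unfolding M0 M1 L_def by simp
  moreover have "tr M = 0" unfolding tr_def using M Mij irr by (simp add: I_def)
  ultimately have sumL: "(\<Sum>l\<in>#L. l) = 0" by simp
  have "tr (M*M) = (\<Sum>l\<in>#L. l^2)"
    using trace_pow_eig[OF M cp, of 0 2] unfolding M0 M2 L_def by simp
  moreover have "tr (M*M) = P"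
    unfolding tr_def P_def using M Mij symM
    by (auto simp: scalar_prod_def lessThan_atLeast0 I_def intro!: sum.cong)
  ultimately have sqL: "(\<Sum>l\<in>#L. l^2) = P" by simp
  have I01: "0 \<le> I i k" "I i k \<le> 1" for i k unfolding I_def by auto
  have "min_degree n E \<in> degree n E ` {0..<n}"
    unfolding min_degree_def using n2 by (intro Min_in) auto
  then obtain v where v: "v < n" and dv: "min_degree n E = degree n E v" by auto
  have degv: "real (degree n E v) = (\<Sum>k<n. I v k)" unfolding I_def by (rule degree_sum)
  have degv': "(\<Sum>i<n. I i v) = real (degree n E v)" unfolding degv I_def using symE
    by (intro sum.cong) auto
  define y where "y i = (if i = v then 0 else 1 :: real)" for i
  define S' where "S' = {..<n} - {v}"
  have vin: "v \<in> {..<n}" using v by simp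
  have Ys: "(\<Sum>i<n. (y i)^2) = real n - 1"
  proof -
    have "(\<Sum>i<n. (y i)^2) = (y v)^2 + (\<Sum>i\<in>S'. (y i)^2)"
      unfolding S'_def by (rule sum.remove[OF _ vin]) simp
    also have "\<dots> = real (card S')" unfolding S'_def y_def by simp
    also have "\<dots> = real n - 1" unfolding S'_def using v by (simp add: of_nat_diff)
    finally show ?thesis .
  qed
  have qfM: "qf M y = (\<Sum>i\<in>S'. \<Sum>k\<in>S'. I i k)"
  proof -
    have "qf M y = (\<Sum>i<n. \<Sum>k<n. y i * I i k * y k)"
      unfolding qf_def using M Mij by (auto intro!: sum.cong)
    also have "\<dots> = (\<Sum>i\<in>S'. \<Sum>k<n. y i * I i k * y k)"
      unfolding S'_def by (subst sum.remove[OF _ vin]) (auto simp: y_def)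
    also have "\<dots> = (\<Sum>i\<in>S'. \<Sum>k\<in>S'. I i k)"
    proof (rule sum.cong[OF refl])
      fix i assume i: "i \<in> S'"
      have "(\<Sum>k<n. y i * I i k * y k) = (\<Sum>k\<in>S'. y i * I i k * y k)"
        unfolding S'_def by (subst sum.remove[OF _ vin]) (auto simp: y_def)
      also have "\<dots> = (\<Sum>k\<in>S'. I i k)" using i unfolding S'_def y_def by (intro sum.cong) auto
      finally show "(\<Sum>k<n. y i * I i k * y k) = (\<Sum>k\<in>S'. I i k)" .
    qed
    finally show ?thesis .
  qed
  have Psplit: "P = qf M y + 2 * real (degree n E v)"
  proof -
    have "P = (\<Sum>k<n. I v k) + (\<Sum>i\<in>S'. \<Sum>k<n. I i k)"
      unfolding P_def S'_def by (rule sum.remove[OF _ vin]) simp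
    also have "(\<Sum>i\<in>S'. \<Sum>k<n. I i k) = (\<Sum>i\<in>S'. I i v + (\<Sum>k\<in>S'. I i k))"
      unfolding S'_def by (intro sum.cong refl) (rule sum.remove[OF _ vin], simp)
    also have "\<dots> = (\<Sum>i\<in>S'. I i v) + qf M y" unfolding qfM by (simp add: sum.distrib)
    also have "(\<Sum>i\<in>S'. I i v) = (\<Sum>i<n. I i v)"
    proof -
      have "(\<Sum>i<n. I i v) = I v v + (\<Sum>i\<in>S'. I i v)"
        unfolding S'_def by (rule sum.remove[OF _ vin]) simp
      thus ?thesis using irr[of v] by (simp add: I_def)
    qed
    finally show ?thesis using degv degv' by simp
  qed
  have two_m: "2 * real (num_edges n E) = P" using edges2[OF g] unfolding P_def I_def .
  have qfM_nn: "0 \<le> qf M y" unfolding qfM by (intro sum_nonneg) (simp add: I01)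
  have n1: "real n - 1 > 0" using n2 by simp
  have xq: "x = qf M y / (real n - 1)"
    unfolding x_def using two_m Psplit dv by (simp add: algebra_simps)
  have x0: "0 \<le> x" unfolding xq using qfM_nn n1 by simp
  define c where "c = real n"
  define rho where "rho = x + c"
  have qfc: "qf (M + c \<cdot>\<^sub>m 1\<^sub>m n) y = qf M y + c * (\<Sum>i<n. (y i)^2)"
  proof -
    have "qf (M + c \<cdot>\<^sub>m 1\<^sub>m n) y = (\<Sum>i<n. \<Sum>k<n. y i * M$$(i,k) * y k + (if k = i then c * (y i)^2 else 0))"
    proof -
      have ent: "y i * (M + c \<cdot>\<^sub>m 1\<^sub>m n)$$(i,k) * y k = y i * M$$(i,k) * y k + (if k = i then c * (y i)^2 else 0)"
        if "i<n" "k<n" for i k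
        using M that by (cases "k = i") (auto simp: power2_eq_square algebra_simps)
      show ?thesis unfolding qf_def using M ent by (auto intro!: sum.cong)
    qed
    also have "\<dots> = qf M y + c * (\<Sum>i<n. (y i)^2)"
      unfolding qf_def using M by (simp add: sum.distrib sum_distrib_left)
    finally show ?thesis .
  qed
  have rho_eq: "qf (M + c \<cdot>\<^sub>m 1\<^sub>m n) y = rho * (\<Sum>i<n. (y i)^2)"
    unfolding qfc Ys rho_def xq using n1 by (simp add: field_simps)
  have rpos: "0 < rho" unfolding rho_def c_def using x0 n2 by simp
  have Ypos: "0 < (\<Sum>i<n. (y i)^2)" unfolding Ys using n1 .
  have Pn: "P \<le> real n ^ 2"
  proof -
    have "P \<le> (\<Sum>i<n. \<Sum>k<n. 1)" unfolding P_def by (intro sum_mono) (simp add: I01)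
    thus ?thesis by (simp add: power2_eq_square)
  qed
  have nonneg: "0 \<le> l + c" if "l \<in># proots (char_poly M)" for l
  proof -
    have "l^2 \<le> (\<Sum>l\<in>#L. l^2)" using that unfolding L_def by (intro mset_term_le) auto
    hence "l^2 \<le> (real n)^2" using sqL Pn by simp
    hence "\<bar>l\<bar> \<le> real n" using abs_le_square_iff[of l "real n"] by simp
    thus ?thesis unfolding c_def by linarith
  qed
  obtain l0 where l0: "l0 \<in># L" and xl0: "rho \<le> l0 + c"
    using exists_big_eig[OF M symM cp nonneg Ypos rho_eq rpos] unfolding L_def by blast
  have xl: "x \<le> l0" using xl0 unfolding rho_def by simp
  from multi_member_split[OF l0] obtain L' where LL: "L = add_mset l0 L'" by blast
  have sizeL': "real (size L') = real n - 1" using sizeL LL n2 by simp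
  have sumL': "(\<Sum>l\<in>#L'. l) = - l0" using sumL LL by simp
  define D where "D = (\<Sum>l\<in>#L'. exp l - (1 + l))"
  have "(\<Sum>l\<in>#L'. (0::real)) \<le> D" unfolding D_def by (intro sum_mset_mono) (simp add: exp_ge_add_one_self)
  hence D0: "0 \<le> D" by simp
  have "(\<Sum>l\<in>#L'. exp l) = (\<Sum>l\<in>#L'. (1 + l)) + D"
    unfolding D_def by (simp add: sum_mset.distrib[symmetric])
  also have "(\<Sum>l\<in>#L'. (1 + l)) = real (size L') + (\<Sum>l\<in>#L'. l)"
    by (simp add: sum_mset.distrib sum_mset_constant)
  finally have EEf: "estrada_index n E = exp l0 + (real n - 1) - l0 + D"
    unfolding EE LL using sizeL' sumL' by simp
  have mono: "exp x - x \<le> exp l0 - l0" by (rule exp_minus_mono[OF x0 xl])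
  have part1: "exp x + (real n - 1) - x \<le> estrada_index n E" using EEf mono D0 by linarith
  have zeroP: "(\<forall>l\<in>#L. l = 0) \<longleftrightarrow> P = 0"
  proof
    assume a: "\<forall>l\<in>#L. l = 0"
    have "(\<Sum>l\<in>#L. l^2) = (\<Sum>l\<in>#L. (0::real))" by (rule sum_mset_cong') (use a in simp)
    thus "P = 0" using sqL by simp
  next
    assume P0: "P = 0"
    show "\<forall>l\<in>#L. l = 0"
    proof
      fix l assume "l \<in># L"
      hence "l^2 \<le> (\<Sum>l\<in>#L. l^2)" by (intro mset_term_le) auto
      thus "l = 0" using sqL P0 by simp
    qed
  qed
  have Pedge: "P = 0 \<longleftrightarrow> (\<forall>i<n. \<forall>k<n. \<not> E i k)"
  proof -
    have "P = 0 \<longleftrightarrow> (\<forall>i\<in>{..<n}. (\<Sum>k<n. I i k) = 0)"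
      unfolding P_def by (rule sum_nonneg_eq_0_iff) (auto intro: sum_nonneg simp: I01)
    also have "\<dots> \<longleftrightarrow> (\<forall>i\<in>{..<n}. \<forall>k\<in>{..<n}. I i k = 0)"
      by (intro ball_cong refl sum_nonneg_eq_0_iff) (auto simp: I01)
    finally show ?thesis by (auto simp: I_def)
  qed
  have isoE: "graph_iso n E edgeless \<longleftrightarrow> (\<forall>i<n. \<forall>k<n. \<not> E i k)"
  proof
    assume "graph_iso n E edgeless"
    then obtain f where "\<forall>i<n. \<forall>j<n. E i j \<longleftrightarrow> edgeless (f i) (f j)" unfolding graph_iso_def by blast
    thus "\<forall>i<n. \<forall>k<n. \<not> E i k" by (simp add: edgeless_def)
  next
    assume "\<forall>i<n. \<forall>k<n. \<not> E i k"
    thus "graph_iso n E edgeless" unfolding graph_iso_def edgeless_def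
      by (intro exI[of _ id]) auto
  qed
  have part2: "estrada_index n E = exp x + (real n - 1) - x \<longleftrightarrow> graph_iso n E edgeless"
  proof
    assume eq: "estrada_index n E = exp x + (real n - 1) - x"
    have D00: "D = 0" using eq EEf mono D0 by linarith
    have L'0: "\<forall>l\<in>#L'. l = 0"
    proof (rule ccontr)
      assume "\<not> ?thesis"
      then obtain l where l: "l \<in># L'" "l \<noteq> 0" by blast
      have "exp l - (1 + l) \<le> D" unfolding D_def
        by (rule mset_term_le[OF _ l(1)]) (simp add: exp_ge_add_one_self)
      moreover have "0 < exp l - (1 + l)" using exp_strict[OF l(2)] by simp
      ultimately show False using D00 by simp
    qed
    hence "(\<Sum>l\<in>#L'. l) = (\<Sum>l\<in>#L'. (0::real))" by (intro sum_mset_cong') simp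
    hence "(\<Sum>l\<in>#L'. l) = 0" by simp
    hence "l0 = 0" using sumL' by simp
    hence "\<forall>l\<in>#L. l = 0" using L'0 LL by simp
    thus "graph_iso n E edgeless" using zeroP Pedge isoE by simp
  next
    assume "graph_iso n E edgeless"
    hence P0: "P = 0" using Pedge isoE by simp
    hence all0: "\<forall>l\<in>#L. l = 0" using zeroP by simp
    have "(\<Sum>l\<in>#L. exp l) = (\<Sum>l\<in>#L. (1::real))" by (rule sum_mset_cong') (use all0 in simp)
    hence "estrada_index n E = real n" unfolding EE using sizeL by (simp add: sum_mset_constant)
    moreover have "qf M y = 0" using P0 Psplit qfM_nn degv
    proof -
      have "\<forall>i<n. \<forall>k<n. \<not> E i k" using P0 Pedge by simp
      thus ?thesis unfolding qfM S'_def I_def by simp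
    qed
    hence "x = 0" unfolding xq by simp
    ultimately show "estrada_index n E = exp x + (real n - 1) - x" by simp
  qed
  show ?thesis using part1 part2 by blast
qed

end
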